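(* Let $S\subseteq[n]$. Suppose each strategic agent $k\in S$ chooses a random vector $\delta_k\in\mathbb{R}^n$ with finite first and second moments, independently across agents ($\delta_i=0$ for $i\notin S$), and that this profile is a (mixed) Nash equilibrium: for every $k\in S$, almost surely $\delta_k$ maximizes $x\mapsto\mathbb{E}[g_k(W'_x,P'_x)]$ over $x\in\mathbb{R}^n$, where $(W'_x,P'_x)$ is the stable point for positions $M+\Delta_x$ with $\Delta_xe_k=x$, $\Delta_xe_j=\delta_j$ ($j\neq k$), and the expectation is over $\{\delta_j:j\in S\setminus\{k\}\}$. Then each $\delta_k$ is almost surely equal to a deterministic vector; i.e., every Nash equilibrium is a pure-strategy Nash equilibrium.
   Context: Fix agents $[n]=\{1,\dots,n\}$. Let $\Sigma\in\mathbb{R}^{n\times n}$ be symmetric positive definite, $\Gamma=\mathrm{diag}(\gamma_1,\dots,\gamma_n)$ with all $\gamma_i>0$, and let $M\in\mathbb{R}^{n\times n}$ be the matrix of true beliefs with $i$-th column $\mu_i=Me_i$. For a matrix of reported negotiating positions $M'\in\mathbb{R}^{n\times n}$, the stable point for $M'$ is the unique pair $(W,P)$ of real $n\times n$ matrices with $W=W^T$, $P^T=-P$ and $M'-P=2\Sigma W\Gamma$; equivalently $\mathrm{vec}(W)=\tfrac12(\Gamma\otimes\Sigma+\Sigma\otimes\Gamma)^{-1}\mathrm{vec}(M'+M'^T)$ and $P=M'-2\Sigma W\Gamma$. Here $\mathrm{vec}$ stacks columns and $e_i$ is the $i$-th standard basis vector. Agent $i$'s (true) utility at $(W,P)$ is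 $g_i(W,P)=w_i^T(\mu_i-Pe_i)-\gamma_i\, w_i^T\Sigma w_i$, where $w_i=We_i$. *)

theory Defs
  imports "HOL-Probability.Probability"
begin

text \<open>Agents are indexed by a finite type 'n (so n = CARD('n)); matrices are real^'n^'n,
  columns are taken with column.\<close>

definition diag_mat :: "real^'n \<Rightarrow> real^'n^'n" where
  "diag_mat g = (\<chi> i j. if i = j then g$i else 0)"

definition is_stable_point :: "real^'n^'n \<Rightarrow> real^'n^'n \<Rightarrow> real^'n^'n \<Rightarrow> real^'n^'n \<Rightarrow> real^'n^'n \<Rightarrow> bool" where
  "is_stable_point Sig Gam M' W P \<longleftrightarrow>
     transpose W = W \<and> transpose P = - P \<and> M' - P = 2 *\<^sub>R (Sig ** W ** Gam)"

definition stable_point :: "real^'n^'n \<Rightarrow> real^'n^'n \<Rightarrow> real^'n^'n \<Rightarrow> (real^'n^'n) \<times> (real^'n^'n)" where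
  "stable_point Sig Gam M' = (THE (W, P). is_stable_point Sig Gam M' W P)"

text \<open>True utility g_i(W,P) of agent i, with mu_i = column i of M.\<close>
definition utility :: "real^'n^'n \<Rightarrow> real^'n \<Rightarrow> real^'n^'n \<Rightarrow> 'n \<Rightarrow> (real^'n^'n) \<times> (real^'n^'n) \<Rightarrow> real" where
  "utility Sig g M i WP =
     (let W = fst WP; P = snd WP; w = column i W
      in w \<bullet> (column i M - column i P) - g$i * (w \<bullet> (Sig *v w)))"

definition deviate :: "('n \<Rightarrow> 'w \<Rightarrow> real^'n) \<Rightarrow> 'n \<Rightarrow> real^'n \<Rightarrow> 'w \<Rightarrow> real^'n^'n" where
  "deviate delta k x \<omega> = (\<chi> r c. if c = k then x$r else delta c \<omega> $ r)"

definition expected_utility ::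
  "'w measure \<Rightarrow> real^'n^'n \<Rightarrow> real^'n \<Rightarrow> real^'n^'n \<Rightarrow> ('n \<Rightarrow> 'w \<Rightarrow> real^'n) \<Rightarrow> 'n \<Rightarrow> real^'n \<Rightarrow> real" where
  "expected_utility Pr Sig g M delta k x =
     (\<integral>\<omega>. utility Sig g M k (stable_point Sig (diag_mat g) (M + deviate delta k x \<omega>)) \<partial>Pr)"

end

theory Submission
  imports Defs
begin


lemma mult_diag: "((A::real^'n^'n) ** diag_mat g) $ i $ j = A$i$j * g$j"
  by (simp add: matrix_matrix_mult_def diag_mat_def if_distrib cong: if_cong)

lemma inner_mat: "(A::real^'n^'n) \<bullet> B = (\<Sum>i\<in>UNIV. \<Sum>j\<in>UNIV. A$i$j * B$i$j)"
  by (simp add: inner_vec_def)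

lemma sym_skew_inner:
  fixes W P :: "real^'n^'n"
  assumes "transpose W = W" "transpose P = - P"
  shows "W \<bullet> P = 0"
proof -
  have w: "W$i$j = W$j$i" for i j
  proof - have "(transpose W)$j$i = W$j$i" using assms(1) by simp
    then show ?thesis by (simp add: transpose_def) qed
  have p: "P$i$j = - P$j$i" for i j
  proof - have "(transpose P)$j$i = - P$j$i" using assms(2) by simp
    then show ?thesis by (simp add: transpose_def) qed
  have "W \<bullet> P = (\<Sum>i\<in>UNIV. \<Sum>j\<in>UNIV. W$i$j * P$i$j)" by (rule inner_mat)
  also have "\<dots> = (\<Sum>j\<in>UNIV. \<Sum>i\<in>UNIV. W$i$j * P$i$j)" by (rule sum.swap)
  also have "\<dots> = - (\<Sum>j\<in>UNIV. \<Sum>i\<in>UNIV. W$j$i * P$j$i)"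
  proof -
    have t: "W$i$j * P$i$j = - (W$j$i * P$j$i)" for i j using w[of i j] p[of i j] by simp
    have "(\<Sum>j\<in>UNIV. \<Sum>i\<in>UNIV. W$i$j * P$i$j) = (\<Sum>j\<in>UNIV. \<Sum>i\<in>UNIV. - (W$j$i * P$j$i))"
      by (intro sum.cong refl) (rule t)
    then show ?thesis by (simp add: sum_negf)
  qed
  finally have "W \<bullet> P = - (W \<bullet> P)" by (simp add: inner_mat)
  then show ?thesis by simp
qed

lemma frob_SWG:
  fixes W Sig :: "real^'n^'n"
  shows "W \<bullet> (Sig ** W ** diag_mat g) = (\<Sum>j\<in>UNIV. g$j * (column j W \<bullet> (Sig *v column j W)))"
proof -
  have "W \<bullet> (Sig ** W ** diag_mat g) = (\<Sum>i\<in>UNIV. \<Sum>j\<in>UNIV. W$i$j * ((Sig ** W)$i$j * g$j))"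
    by (simp add: inner_mat mult_diag)
  also have "\<dots> = (\<Sum>j\<in>UNIV. \<Sum>i\<in>UNIV. W$i$j * ((Sig ** W)$i$j * g$j))" by (rule sum.swap)
  also have "\<dots> = (\<Sum>j\<in>UNIV. g$j * (column j W \<bullet> (Sig *v column j W)))"
    by (simp add: inner_vec_def column_def matrix_matrix_mult_def matrix_vector_mult_def
        sum_distrib_left sum_distrib_right mult_ac)
  finally show ?thesis .
qed




context
  fixes Sig :: "real^'n^'n" and g :: "real^'n"
  assumes pd: "\<forall>x. x \<noteq> 0 \<longrightarrow> 0 < x \<bullet> (Sig *v x)"
    and gpos: "\<forall>i. 0 < g$i"
begin

lemma stable_inner:
  assumes "is_stable_point Sig (diag_mat g) A W P"
  shows "W \<bullet> A = 2 * (\<Sum>j\<in>UNIV. g$j * (column j W \<bullet> (Sig *v column j W)))"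
proof -
  from assms have t: "transpose W = W" "transpose P = - P" and e: "A - P = 2 *\<^sub>R (Sig ** W ** diag_mat g)"
    by (auto simp: is_stable_point_def)
  from e have "A = P + 2 *\<^sub>R (Sig ** W ** diag_mat g)" by (simp add: algebra_simps)
  then have "W \<bullet> A = W \<bullet> P + 2 * (W \<bullet> (Sig ** W ** diag_mat g))"
    by (simp add: inner_add_right)
  then show ?thesis using sym_skew_inner[OF t] frob_SWG by simp
qed

lemma terms_nonneg: "0 \<le> g$j * (v \<bullet> (Sig *v v))"
proof (cases "v = 0")
  case False then show ?thesis using pd gpos by (simp add: less_imp_le)
qed simp

lemma stable_zero:
  assumes "is_stable_point Sig (diag_mat g) 0 W P"
  shows "W = 0 \<and> P = 0"
proof -
  have "(\<Sum>j\<in>UNIV. g$j * (column j W \<bullet> (Sig *v column j W))) = 0"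
    using stable_inner[OF assms] by simp
  then have z: "g$j * (column j W \<bullet> (Sig *v column j W)) = 0" for j
    using sum_nonneg_eq_0_iff[of UNIV "\<lambda>j. g$j * (column j W \<bullet> (Sig *v column j W))"] by (simp add: terms_nonneg)
  have c: "column j W = 0" for j
  proof (rule ccontr)
    assume "column j W \<noteq> 0"
    then have "0 < column j W \<bullet> (Sig *v column j W)" using pd by simp
    moreover have "0 < g$j" using gpos by simp
    ultimately show False using z[of j] by simp
  qed
  have W: "W = 0"
  proof (simp add: vec_eq_iff, intro allI)
    fix i j show "W $ i $ j = 0" using c[of j] by (simp add: vec_eq_iff column_def)
  qed
  with assms show ?thesis by (simp add: is_stable_point_def)
qed

lemma stable_lin:
  assumes "is_stable_point Sig (diag_mat g) A1 W1 P1" "is_stable_point Sig (diag_mat g) A2 W2 P2"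
  shows "is_stable_point Sig (diag_mat g) (a *\<^sub>R A1 + b *\<^sub>R A2) (a *\<^sub>R W1 + b *\<^sub>R W2) (a *\<^sub>R P1 + b *\<^sub>R P2)"
proof -
  from assms have t1: "transpose W1 = W1" "transpose P1 = - P1" and e1: "A1 - P1 = 2 *\<^sub>R (Sig ** W1 ** diag_mat g)"
    by (auto simp: is_stable_point_def)
  from assms have t2: "transpose W2 = W2" "transpose P2 = - P2" and e2: "A2 - P2 = 2 *\<^sub>R (Sig ** W2 ** diag_mat g)"
    by (auto simp: is_stable_point_def)
  have "transpose (a *\<^sub>R W1 + b *\<^sub>R W2) = a *\<^sub>R transpose W1 + b *\<^sub>R transpose W2"
    by (simp add: vec_eq_iff transpose_def)
  then have T1: "transpose (a *\<^sub>R W1 + b *\<^sub>R W2) = a *\<^sub>R W1 + b *\<^sub>R W2" using t1 t2 by simp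
  have "transpose (a *\<^sub>R P1 + b *\<^sub>R P2) = a *\<^sub>R transpose P1 + b *\<^sub>R transpose P2"
    by (simp add: vec_eq_iff transpose_def)
  then have T2: "transpose (a *\<^sub>R P1 + b *\<^sub>R P2) = - (a *\<^sub>R P1 + b *\<^sub>R P2)" using t1 t2 by simp
  have mm: "Sig ** (a *\<^sub>R W1 + b *\<^sub>R W2) ** diag_mat g
      = a *\<^sub>R (Sig ** W1 ** diag_mat g) + b *\<^sub>R (Sig ** W2 ** diag_mat g)"
    by (simp add: vec_eq_iff matrix_matrix_mult_def sum.distrib sum_distrib_left algebra_simps)
  have "(a *\<^sub>R A1 + b *\<^sub>R A2) - (a *\<^sub>R P1 + b *\<^sub>R P2) = a *\<^sub>R (A1 - P1) + b *\<^sub>R (A2 - P2)"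
    by (simp add: algebra_simps)
  also have "\<dots> = 2 *\<^sub>R (a *\<^sub>R (Sig ** W1 ** diag_mat g) + b *\<^sub>R (Sig ** W2 ** diag_mat g))"
    by (simp only: e1 e2 scaleR_add_right scaleR_scaleR mult.commute)
  also have "\<dots> = 2 *\<^sub>R (Sig ** (a *\<^sub>R W1 + b *\<^sub>R W2) ** diag_mat g)" by (simp only: mm)
  finally show ?thesis using T1 T2 by (simp add: is_stable_point_def)
qed

end



definition Lm :: "real^'n^'n \<Rightarrow> real^'n \<Rightarrow> real^'n^'n \<Rightarrow> real^'n^'n" where
  "Lm Sig g A = 2 *\<^sub>R (Sig ** ((1/2) *\<^sub>R (A + transpose A)) ** diag_mat g) + (1/2) *\<^sub>R (A - transpose A)"

context
  fixes Sig :: "real^'n^'n" and g :: "real^'n"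
  assumes pd: "\<forall>x. x \<noteq> 0 \<longrightarrow> 0 < x \<bullet> (Sig *v x)"
    and gpos: "\<forall>i. 0 < g$i"
begin

lemma Lm_linear: "linear (Lm Sig g)"
proof (rule linearI)
  fix x y :: "real^'n^'n" and c :: real
  show "Lm Sig g (x + y) = Lm Sig g x + Lm Sig g y"
    by (simp add: Lm_def vec_eq_iff matrix_matrix_mult_def transpose_def sum.distrib sum_distrib_left algebra_simps)
  show "Lm Sig g (c *\<^sub>R x) = c *\<^sub>R Lm Sig g x"
    by (simp add: Lm_def vec_eq_iff matrix_matrix_mult_def transpose_def sum.distrib sum_distrib_left algebra_simps)
qed

lemma sym_part: "transpose ((1/2) *\<^sub>R (A + transpose A)) = (1/2) *\<^sub>R (A + transpose A)"
  by (simp add: vec_eq_iff transpose_def)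
lemma skew_part: "transpose ((1/2) *\<^sub>R (A - transpose A)) = - ((1/2) *\<^sub>R (A - transpose A))"
  by (simp add: vec_eq_iff transpose_def algebra_simps)
lemma parts: "(1/2) *\<^sub>R (A + transpose A) + (1/2) *\<^sub>R (A - transpose A) = (A::real^'n^'n)"
  by (simp add: vec_eq_iff transpose_def field_simps)

lemma Lm_inj: "inj (Lm Sig g)"
proof -
  have "A = 0" if "Lm Sig g A = 0" for A
  proof -
    let ?W = "(1/2) *\<^sub>R (A + transpose A)" and ?P = "(1/2) *\<^sub>R (A - transpose A)"
    have e: "0 - ?P = 2 *\<^sub>R (Sig ** ?W ** diag_mat g)" using that unfolding Lm_def
      by (simp add: algebra_simps eq_neg_iff_add_eq_0)
    have "is_stable_point Sig (diag_mat g) 0 ?W ?P"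
      unfolding is_stable_point_def by (intro conjI sym_part skew_part e)
    then have "?W = 0 \<and> ?P = 0" using stable_zero[OF pd gpos] by blast
    then show "A = 0" using parts[of A] by (metis add.right_neutral)
  qed
  then show ?thesis using linear_injective_0[OF Lm_linear] by blast
qed

lemma stable_exists: "\<exists>W P. is_stable_point Sig (diag_mat g) A W P"
proof -
  have "surj (Lm Sig g)" by (rule linear_injective_imp_surjective[OF Lm_linear Lm_inj]) simp
  then obtain B where B: "A = Lm Sig g B" by blast
  let ?W = "(1/2) *\<^sub>R (B + transpose B)" and ?P = "(1/2) *\<^sub>R (B - transpose B)"
  have e: "A - ?P = 2 *\<^sub>R (Sig ** ?W ** diag_mat g)" using B unfolding Lm_def by simp
  have "is_stable_point Sig (diag_mat g) A ?W ?P"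
      unfolding is_stable_point_def by (intro conjI sym_part skew_part e)
  then show ?thesis by blast
qed

lemma stable_unique:
  assumes "is_stable_point Sig (diag_mat g) A W1 P1" "is_stable_point Sig (diag_mat g) A W2 P2"
  shows "W1 = W2 \<and> P1 = P2"
proof -
  have "is_stable_point Sig (diag_mat g) (1 *\<^sub>R A + (-1) *\<^sub>R A) (1 *\<^sub>R W1 + (-1) *\<^sub>R W2) (1 *\<^sub>R P1 + (-1) *\<^sub>R P2)"
    by (rule stable_lin[OF pd gpos assms])
  then have "is_stable_point Sig (diag_mat g) 0 (W1 - W2) (P1 - P2)" by simp
  then have "W1 - W2 = 0 \<and> P1 - P2 = 0" using stable_zero[OF pd gpos] by blast
  then show ?thesis by simp
qed

lemma sp_prop: "is_stable_point Sig (diag_mat g) A (fst (stable_point Sig (diag_mat g) A)) (snd (stable_point Sig (diag_mat g) A))"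
proof -
  have ex1: "\<exists>!p. (case p of (W, P) \<Rightarrow> is_stable_point Sig (diag_mat g) A W P)"
  proof -
    obtain W P where "is_stable_point Sig (diag_mat g) A W P" using stable_exists by blast
    then show ?thesis using stable_unique by (intro ex1I[of _ "(W,P)"]) auto
  qed
  define p where "p = stable_point Sig (diag_mat g) A"
  have "case p of (W,P) \<Rightarrow> is_stable_point Sig (diag_mat g) A W P"
    unfolding p_def stable_point_def by (rule theI'[OF ex1])
  then show ?thesis unfolding p_def[symmetric] by (cases p) simp
qed

lemma sp_eq: "is_stable_point Sig (diag_mat g) A W P \<Longrightarrow> stable_point Sig (diag_mat g) A = (W, P)"
  using stable_unique[OF sp_prop] by (metis prod.collapse)

lemma sp_comb: "stable_point Sig (diag_mat g) (a *\<^sub>R A + b *\<^sub>R B) =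
   (a *\<^sub>R fst (stable_point Sig (diag_mat g) A) + b *\<^sub>R fst (stable_point Sig (diag_mat g) B),
    a *\<^sub>R snd (stable_point Sig (diag_mat g) A) + b *\<^sub>R snd (stable_point Sig (diag_mat g) B))"
  by (rule sp_eq, rule stable_lin[OF pd gpos sp_prop sp_prop])

lemma spW_add: "fst (stable_point Sig (diag_mat g) (A + B)) = fst (stable_point Sig (diag_mat g) A) + fst (stable_point Sig (diag_mat g) B)"
  using sp_comb[of 1 A 1 B] by simp

lemma spW_linear: "linear (\<lambda>A. fst (stable_point Sig (diag_mat g) A))"
proof (rule linearI)
  fix A B :: "real^'n^'n" and c :: real
  show "fst (stable_point Sig (diag_mat g) (A + B)) = fst (stable_point Sig (diag_mat g) A) + fst (stable_point Sig (diag_mat g) B)"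
    by (rule spW_add)
  show "fst (stable_point Sig (diag_mat g) (c *\<^sub>R A)) = c *\<^sub>R fst (stable_point Sig (diag_mat g) A)"
    using sp_comb[of c A 0 A] by simp
qed

end



definition Emat :: "'n \<Rightarrow> real^'n \<Rightarrow> real^'n^'n" where
  "Emat k x = (\<chi> r c. if c = k then x$r else 0)"

lemma column_SWG: "column k ((Sig::real^'n^'n) ** W ** diag_mat g) = g$k *\<^sub>R (Sig *v column k (W::real^'n^'n))"
proof -
  have "column k (Sig ** W ** diag_mat g) $ i = (Sig ** W) $ i $ k * g $ k" for i
    by (simp add: column_def mult_diag matrix_mul_assoc)
  then show ?thesis
    by (simp add: vec_eq_iff matrix_matrix_mult_def matrix_vector_mult_def sum_distrib_right mult_ac column_def)
qed

lemma column_diff: "column k (A - B) = column k A - column k (B::real^'n^'n)"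
  by (simp add: vec_eq_iff column_def)
lemma column_add: "column k (A + B) = column k A + column k (B::real^'n^'n)"
  by (simp add: vec_eq_iff column_def)
lemma column_scaleR: "column k (c *\<^sub>R A) = c *\<^sub>R column k (A::real^'n^'n)"
  by (simp add: vec_eq_iff column_def)

lemma deviate_add: "deviate delta k (z + h) \<omega> = deviate delta k z \<omega> + Emat k h"
  by (simp add: vec_eq_iff deviate_def Emat_def)
lemma column_deviate: "column k (deviate delta k x \<omega>) = x"
  by (simp add: vec_eq_iff deviate_def column_def)

lemma inner_Emat: "W \<bullet> Emat k h = column k W \<bullet> h"
  by (simp add: inner_mat Emat_def inner_vec_def column_def if_distrib cong: if_cong)

context
  fixes Sig :: "real^'n^'n" and g :: "real^'n"
  assumes pd: "\<forall>x. x \<noteq> 0 \<longrightarrow> 0 < x \<bullet> (Sig *v x)"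
    and gpos: "\<forall>i. 0 < g$i"
begin

lemma utility_formula:
  assumes "column k A = column k M + x"
  shows "utility Sig g M k (stable_point Sig (diag_mat g) A) =
     - (column k (fst (stable_point Sig (diag_mat g) A)) \<bullet> x)
     + g$k * (column k (fst (stable_point Sig (diag_mat g) A)) \<bullet> (Sig *v column k (fst (stable_point Sig (diag_mat g) A))))"
proof -
  define W where "W = fst (stable_point Sig (diag_mat g) A)"
  define P where "P = snd (stable_point Sig (diag_mat g) A)"
  define w where "w = column k W"
  have "is_stable_point Sig (diag_mat g) A W P" unfolding W_def P_def by (rule sp_prop[OF pd gpos])
  then have "A - P = 2 *\<^sub>R (Sig ** W ** diag_mat g)" by (simp add: is_stable_point_def)
  then have "column k A - column k P = 2 *\<^sub>R (g$k *\<^sub>R (Sig *v w))"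
    by (metis column_diff column_scaleR column_SWG w_def)
  then have cp: "column k M - column k P = 2 *\<^sub>R (g$k *\<^sub>R (Sig *v w)) - x"
    using assms by (simp add: algebra_simps)
  have "utility Sig g M k (stable_point Sig (diag_mat g) A) = w \<bullet> (column k M - column k P) - g$k * (w \<bullet> (Sig *v w))"
    by (simp add: utility_def Let_def W_def P_def w_def)
  also have "\<dots> = - (w \<bullet> x) + g$k * (w \<bullet> (Sig *v w))"
    by (simp add: cp inner_diff_right algebra_simps)
  finally show ?thesis unfolding w_def W_def .
qed

lemma stable_S_zero:
  assumes "is_stable_point Sig (diag_mat g) A W P"
    and "(\<Sum>j\<in>UNIV. g$j * (column j W \<bullet> (Sig *v column j W))) = 0"
  shows "W = 0"
proof -
  have z: "g$j * (column j W \<bullet> (Sig *v column j W)) = 0" for j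
    using assms(2) sum_nonneg_eq_0_iff[of UNIV "\<lambda>j. g$j * (column j W \<bullet> (Sig *v column j W))"]
    by (simp add: terms_nonneg[OF pd gpos])
  have c: "column j W = 0" for j
  proof (rule ccontr)
    assume "column j W \<noteq> 0"
    then have "0 < column j W \<bullet> (Sig *v column j W)" using pd by simp
    moreover have "0 < g$j" using gpos by simp
    ultimately show False using z[of j] by simp
  qed
  show "W = 0"
  proof (simp add: vec_eq_iff, intro allI)
    fix i j show "W $ i $ j = 0" using c[of j] by (simp add: vec_eq_iff column_def)
  qed
qed

lemma q_neg:
  assumes "h \<noteq> 0"
  shows "- (column k (fst (stable_point Sig (diag_mat g) (Emat k h))) \<bullet> h)
     + g$k * (column k (fst (stable_point Sig (diag_mat g) (Emat k h))) \<bullet> (Sig *v column k (fst (stable_point Sig (diag_mat g) (Emat k h))))) < 0"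
proof -
  define W where "W = fst (stable_point Sig (diag_mat g) (Emat k h))"
  define P where "P = snd (stable_point Sig (diag_mat g) (Emat k h))"
  define t where "t j = g$j * (column j W \<bullet> (Sig *v column j W))" for j
  define S where "S = (\<Sum>j\<in>UNIV. t j)"
  have st: "is_stable_point Sig (diag_mat g) (Emat k h) W P" unfolding W_def P_def by (rule sp_prop[OF pd gpos])
  have "column k W \<bullet> h = 2 * S"
    using stable_inner[OF pd gpos st] by (simp add: inner_Emat S_def t_def)
  moreover have "t k \<le> S" unfolding S_def
    by (rule member_le_sum) (auto simp: t_def terms_nonneg[OF pd gpos])
  moreover have "S \<noteq> 0"
  proof
    assume "S = 0"
    then have W0: "W = 0" using stable_S_zero[OF st] by (simp add: S_def t_def)
    then have "transpose (Emat k h) = - Emat k h" using st by (simp add: is_stable_point_def)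
    have "h $ i = 0" for i
    proof -
      have "transpose (Emat k h) $ k $ i = (- Emat k h) $ k $ i" using \<open>transpose (Emat k h) = - Emat k h\<close> by simp
      then have e: "h $ i = - (if i = k then h $ k else 0)" by (simp add: transpose_def Emat_def)
      show ?thesis proof (cases "i = k")
        case True then show ?thesis using e by simp
      next
        case False then show ?thesis using e by simp
      qed
    qed
    with assms show False by (simp add: vec_eq_iff)
  qed
  moreover have "0 \<le> S" unfolding S_def by (rule sum_nonneg) (simp add: t_def terms_nonneg[OF pd gpos])
  ultimately show ?thesis by (simp add: W_def[symmetric] t_def)
qed

end



lemma vec_meas:
  fixes f :: "'w \<Rightarrow> 'a::euclidean_space ^ 'n"
  assumes "\<And>i. (\<lambda>\<omega>. f \<omega> $ i) \<in> borel_measurable M"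
  shows "f \<in> borel_measurable M"
proof (subst borel_measurable_euclidean_space, intro ballI)
  fix b :: "'a^'n" assume "b \<in> Basis"
  then obtain i u where b: "b = axis i u" and u: "u \<in> Basis" by (auto simp: Basis_vec_def)
  have "(\<lambda>\<omega>. f \<omega> $ i \<bullet> u) \<in> borel_measurable M"
    using assms[of i] by (intro borel_measurable_inner) auto
  then show "(\<lambda>x. f x \<bullet> b) \<in> borel_measurable M" by (simp add: b inner_axis)
qed

lemma dev_meas:
  fixes delta :: "'n \<Rightarrow> 'w \<Rightarrow> real^'n"
  assumes "\<And>c. delta c \<in> borel_measurable M"
  shows "(\<lambda>\<omega>. deviate delta k x \<omega>) \<in> borel_measurable M"
proof (rule vec_meas, rule vec_meas)
  fix r c
  have "(\<lambda>\<omega>. delta c \<omega> $ r) \<in> borel_measurable M"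
    by (rule measurable_compose[OF assms borel_measurable_nth])
  then show "(\<lambda>\<omega>. deviate delta k x \<omega> $ r $ c) \<in> borel_measurable M"
    by (cases "c = k") (simp_all add: deviate_def)
qed

lemma norm_sq_columns: "(norm (A::real^'n^'n))\<^sup>2 = (\<Sum>c\<in>UNIV. (norm (column c A))\<^sup>2)"
proof -
  have "(norm A)\<^sup>2 = (\<Sum>i\<in>UNIV. \<Sum>j\<in>UNIV. A$i$j * A$i$j)" by (simp add: power2_norm_eq_inner inner_mat)
  also have "\<dots> = (\<Sum>j\<in>UNIV. \<Sum>i\<in>UNIV. A$i$j * A$i$j)" by (rule sum.swap)
  also have "\<dots> = (\<Sum>c\<in>UNIV. (norm (column c A))\<^sup>2)"
    by (simp add: power2_norm_eq_inner inner_vec_def column_def)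
  finally show ?thesis .
qed

lemma norm_dev:
  "(norm (deviate delta k x \<omega>))\<^sup>2 \<le> (norm x)\<^sup>2 + (\<Sum>c\<in>UNIV. (norm (delta c \<omega>))\<^sup>2)"
proof -
  have col: "column c (deviate delta k x \<omega>) = (if c = k then x else delta c \<omega>)" for c
    by (simp add: vec_eq_iff column_def deviate_def)
  have "(norm (deviate delta k x \<omega>))\<^sup>2 = (\<Sum>c\<in>UNIV. (norm (if c = k then x else delta c \<omega>))\<^sup>2)"
    by (simp add: norm_sq_columns col)
  also have "\<dots> \<le> (\<Sum>c\<in>UNIV. (if c = k then (norm x)\<^sup>2 else 0) + (norm (delta c \<omega>))\<^sup>2)"
    by (intro sum_mono) auto
  also have "\<dots> = (norm x)\<^sup>2 + (\<Sum>c\<in>UNIV. (norm (delta c \<omega>))\<^sup>2)"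
    by (simp add: sum.distrib)
  finally show ?thesis .
qed

lemma quad_bound:
  fixes a x :: "real^'n" and Sig :: "real^'n^'n"
  assumes KS: "\<forall>v. norm (Sig *v v) \<le> norm v * KS" and "0 \<le> gk" "0 \<le> KS"
  shows "\<bar>- (a \<bullet> x) + gk * (a \<bullet> (Sig *v a))\<bar> \<le> (1/2 + gk * KS) * (norm a)\<^sup>2 + (norm x)\<^sup>2"
proof -
  have "\<bar>- (a \<bullet> x) + gk * (a \<bullet> (Sig *v a))\<bar> \<le> \<bar>a \<bullet> x\<bar> + gk * \<bar>a \<bullet> (Sig *v a)\<bar>"
  proof -
    have e: "\<bar>gk * (a \<bullet> (Sig *v a))\<bar> = gk * \<bar>a \<bullet> (Sig *v a)\<bar>" using assms(2) by (simp add: abs_mult)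
    show ?thesis using abs_triangle_ineq[of "- (a \<bullet> x)" "gk * (a \<bullet> (Sig *v a))"] unfolding e by simp
  qed
  also have "\<dots> \<le> norm a * norm x + gk * (norm a * (norm a * KS))"
  proof (intro add_mono mult_left_mono)
    show "\<bar>a \<bullet> x\<bar> \<le> norm a * norm x" by (rule Cauchy_Schwarz_ineq2)
    have "\<bar>a \<bullet> (Sig *v a)\<bar> \<le> norm a * norm (Sig *v a)" by (rule Cauchy_Schwarz_ineq2)
    also have "\<dots> \<le> norm a * (norm a * KS)" by (rule mult_left_mono) (use KS in auto)
    finally show "\<bar>a \<bullet> (Sig *v a)\<bar> \<le> norm a * (norm a * KS)" .
  qed (use assms in auto)
  also have "\<dots> \<le> (1/2 + gk * KS) * (norm a)\<^sup>2 + (norm x)\<^sup>2"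
  proof -
    have "0 \<le> (norm a - norm x)\<^sup>2" by simp
    then have h1: "norm a * norm x \<le> (norm a)\<^sup>2 / 2 + (norm x)\<^sup>2 / 2"
      unfolding power2_diff by linarith
    have e1: "(1/2 + gk * KS) * (norm a)\<^sup>2 = (norm a)\<^sup>2/2 + gk * (norm a * (norm a * KS))"
      by (simp add: power2_eq_square algebra_simps)
    have "0 \<le> (norm x)\<^sup>2" by simp
    then show ?thesis using e1 h1 by linarith
  qed
  finally show ?thesis .
qed




theorem mainTheorem8:
  fixes Pr :: "'w measure"
    and Sig :: "real^'n^'n" and g :: "real^'n" and M :: "real^'n^'n"
    and S :: "'n set" and delta :: "'n \<Rightarrow> 'w \<Rightarrow> real^'n"
  assumes "prob_space Pr"
    and "transpose Sig = Sig"
    and "\<forall>x. x \<noteq> 0 \<longrightarrow> 0 < x \<bullet> (Sig *v x)"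
    and "\<forall>i. 0 < g$i"
    and "\<forall>k\<in>S. delta k \<in> borel_measurable Pr"
    and "\<forall>k\<in>S. integrable Pr (delta k)"
    and "\<forall>k\<in>S. integrable Pr (\<lambda>\<omega>. (norm (delta k \<omega>))\<^sup>2)"
    and "prob_space.indep_vars Pr (\<lambda>_. borel) delta S"
    and "\<forall>j. j \<notin> S \<longrightarrow> (\<forall>\<omega>\<in>space Pr. delta j \<omega> = 0)"
    and "\<forall>k\<in>S. AE \<omega> in Pr. \<forall>x. expected_utility Pr Sig g M delta k x
                                 \<le> expected_utility Pr Sig g M delta k (delta k \<omega>)"
  shows "\<forall>k\<in>S. \<exists>c. AE \<omega> in Pr. delta k \<omega> = c"
proof
  fix k assume kS: "k \<in> S"
  note ps = assms(1)
  note pd = assms(3) and gpos = assms(4)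
  define Wf where "Wf A = fst (stable_point Sig (diag_mat g) A)" for A
  define a where "a x \<omega> = column k (Wf (M + deviate delta k x \<omega>))" for x \<omega>
  define \<beta> where "\<beta> h = column k (Wf (Emat k h))" for h
  define q where "q h = - (\<beta> h \<bullet> h) + g$k * (\<beta> h \<bullet> (Sig *v \<beta> h))" for h
  define u where "u x \<omega> = utility Sig g M k (stable_point Sig (diag_mat g) (M + deviate delta k x \<omega>))" for x \<omega>
  define f where "f x = expected_utility Pr Sig g M delta k x" for x
  have f_eq: "f x = (\<integral>\<omega>. u x \<omega> \<partial>Pr)" for x by (simp add: f_def expected_utility_def u_def)
  have u_eq: "u x \<omega> = - (a x \<omega> \<bullet> x) + g$k * (a x \<omega> \<bullet> (Sig *v a x \<omega>))" for x \<omega>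
    unfolding u_def a_def Wf_def by (rule utility_formula[OF pd gpos]) (simp add: column_add column_deviate)
  have a_add: "a (z + h) \<omega> = a z \<omega> + \<beta> h" for z h \<omega>
  proof -
    have "M + deviate delta k (z+h) \<omega> = (M + deviate delta k z \<omega>) + Emat k h" by (simp add: deviate_add add.assoc)
    then show ?thesis unfolding a_def \<beta>_def Wf_def by (simp add: spW_add[OF pd gpos] column_add)
  qed
  have mid: "u (z+h) \<omega> + u (z-h) \<omega> = 2 * u z \<omega> + 2 * q h" for z h \<omega>
  proof -
    have 1: "a (z+h) \<omega> = a z \<omega> + \<beta> h" by (rule a_add)
    have "a z \<omega> = a (z - h) \<omega> + \<beta> h" using a_add[of "z-h" h \<omega>] by simp
    then have 2: "a (z-h) \<omega> = a z \<omega> - \<beta> h" by simp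
    show ?thesis unfolding u_eq 1 2 q_def
      by (simp add: inner_add_left inner_add_right inner_diff_left inner_diff_right
          matrix_vector_right_distrib matrix_vector_mult_diff_distrib algebra_simps)
  qed
  have dm: "delta c \<in> borel_measurable Pr" for c
  proof (cases "c \<in> S")
    case True then show ?thesis using assms(5) by simp
  next
    case False
    then have "\<forall>\<omega>\<in>space Pr. delta c \<omega> = 0" using assms(9) by simp
    then show ?thesis by (subst measurable_cong[where g="\<lambda>_. 0"]) auto
  qed
  have linLk: "linear (\<lambda>B. column k (Wf B))"
  proof (rule linearI)
    fix A B :: "real^'n^'n" and c :: real
    show "column k (Wf (A + B)) = column k (Wf A) + column k (Wf B)"
      unfolding Wf_def by (simp add: spW_add[OF pd gpos] column_add)
    show "column k (Wf (c *\<^sub>R A)) = c *\<^sub>R column k (Wf A)"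
      using linear_scale[OF spW_linear[OF pd gpos], of c A] unfolding Wf_def by (simp add: column_scaleR)
  qed
  then have blLk: "bounded_linear (\<lambda>B. column k (Wf B))" by (simp add: linear_conv_bounded_linear)
  have blS: "bounded_linear (\<lambda>v. Sig *v v)" using matrix_vector_mul_linear[of Sig]
    by (simp add: linear_conv_bounded_linear)
  have am: "a x \<in> borel_measurable Pr" for x
  proof -
    have "(\<lambda>\<omega>. M + deviate delta k x \<omega>) \<in> borel_measurable Pr"
      using dev_meas[OF dm] by (intro borel_measurable_add) auto
    then show ?thesis unfolding a_def
      by (rule borel_measurable_continuous_on[OF linear_continuous_on[OF blLk]])
  qed
  have um: "u x \<in> borel_measurable Pr" for x
  proof -
    have "(\<lambda>\<omega>. Sig *v a x \<omega>) \<in> borel_measurable Pr"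
      by (rule borel_measurable_continuous_on[OF linear_continuous_on[OF blS] am])
    then have "(\<lambda>\<omega>. - (a x \<omega> \<bullet> x) + g$k * (a x \<omega> \<bullet> (Sig *v a x \<omega>))) \<in> borel_measurable Pr"
      using am[of x] by measurable
    then show ?thesis unfolding u_eq[abs_def] .
  qed
  define T where "T \<omega> = (\<Sum>c\<in>UNIV. (norm (delta c \<omega>))\<^sup>2)" for \<omega>
  have Tint: "integrable Pr T"
    unfolding T_def
  proof (rule Bochner_Integration.integrable_sum)
    fix c :: 'n
    show "integrable Pr (\<lambda>\<omega>. (norm (delta c \<omega>))\<^sup>2)"
    proof (cases "c \<in> S")
      case True then show ?thesis using assms(7) by simp
    next
      case False
      then have "\<forall>\<omega>\<in>space Pr. delta c \<omega> = 0" using assms(9) by simp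
      then have "integrable Pr (\<lambda>\<omega>. (norm (delta c \<omega>))\<^sup>2) \<longleftrightarrow> integrable Pr (\<lambda>_. 0::real)"
        by (intro Bochner_Integration.integrable_cong) auto
      then show ?thesis by simp
    qed
  qed
  have T0: "0 \<le> T \<omega>" for \<omega> unfolding T_def by (simp add: sum_nonneg)
  obtain K where K: "K > 0" "\<forall>B. norm (column k (Wf B)) \<le> norm B * K"
    using bounded_linear.pos_bounded[OF blLk] by blast
  obtain KS where KS: "KS > 0" "\<forall>v. norm (Sig *v v) \<le> norm v * KS"
    using bounded_linear.pos_bounded[OF blS] by blast
  have gk0: "0 \<le> g$k" using gpos by (simp add: less_imp_le)
  have uint: "integrable Pr (u x)" for x
  proof -
    define c1 where "c1 = 1/2 + g$k * KS"
    have c10: "0 \<le> c1" unfolding c1_def using gk0 KS by simp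
    define \<alpha> where "\<alpha> = c1 * (K\<^sup>2 * (2 * (norm M)\<^sup>2 + 2 * (norm x)\<^sup>2)) + (norm x)\<^sup>2"
    define \<gamma> where "\<gamma> = 2 * c1 * K\<^sup>2"
    have bnd: "\<bar>u x \<omega>\<bar> \<le> \<alpha> + \<gamma> * T \<omega>" for \<omega>
    proof -
      define B where "B = M + deviate delta k x \<omega>"
      have "\<bar>u x \<omega>\<bar> \<le> c1 * (norm (a x \<omega>))\<^sup>2 + (norm x)\<^sup>2"
        unfolding u_eq c1_def by (rule quad_bound[OF KS(2) gk0 less_imp_le[OF KS(1)]])
      moreover have "(norm (a x \<omega>))\<^sup>2 \<le> K\<^sup>2 * (2 * (norm M)\<^sup>2 + 2 * (norm x)\<^sup>2 + 2 * T \<omega>)"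
      proof -
        have "norm (a x \<omega>) \<le> norm B * K" unfolding a_def B_def using K(2) by blast
        then have "(norm (a x \<omega>))\<^sup>2 \<le> (norm B * K)\<^sup>2" by (rule power_mono) simp
        also have "\<dots> = K\<^sup>2 * (norm B)\<^sup>2" by (simp add: power_mult_distrib)
        also have "\<dots> \<le> K\<^sup>2 * (2 * (norm M)\<^sup>2 + 2 * (norm x)\<^sup>2 + 2 * T \<omega>)"
        proof (rule mult_left_mono)
          have nb: "norm B \<le> norm M + norm (deviate delta k x \<omega>)" unfolding B_def by (rule norm_triangle_ineq)
          have "(norm B)\<^sup>2 \<le> (norm M + norm (deviate delta k x \<omega>))\<^sup>2" by (rule power_mono[OF nb]) simp
          also have "\<dots> \<le> 2 * (norm M)\<^sup>2 + 2 * (norm (deviate delta k x \<omega>))\<^sup>2"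
          proof -
            have "0 \<le> (norm M - norm (deviate delta k x \<omega>))\<^sup>2" by simp
            then show ?thesis unfolding power2_diff power2_sum by linarith
          qed
          also have "\<dots> \<le> 2 * (norm M)\<^sup>2 + 2 * (norm x)\<^sup>2 + 2 * T \<omega>"
            using norm_dev[of delta k x \<omega>] unfolding T_def by linarith
          finally show "(norm B)\<^sup>2 \<le> 2 * (norm M)\<^sup>2 + 2 * (norm x)\<^sup>2 + 2 * T \<omega>" .
        qed simp
        finally show ?thesis .
      qed
      then have "c1 * (norm (a x \<omega>))\<^sup>2 \<le> c1 * (K\<^sup>2 * (2 * (norm M)\<^sup>2 + 2 * (norm x)\<^sup>2 + 2 * T \<omega>))"
        by (rule mult_left_mono) (rule c10)
      moreover have "c1 * (K\<^sup>2 * (2 * (norm M)\<^sup>2 + 2 * (norm x)\<^sup>2 + 2 * T \<omega>)) + (norm x)\<^sup>2 = \<alpha> + \<gamma> * T \<omega>"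
        unfolding \<alpha>_def \<gamma>_def by (simp add: algebra_simps)
      ultimately show ?thesis by linarith
    qed
    have fi: "integrable Pr (\<lambda>\<omega>. \<alpha> + \<gamma> * T \<omega>)"
      using Tint prob_space.finite_measure[OF ps]
      by (intro Bochner_Integration.integrable_add finite_measure.integrable_const integrable_mult_right) auto
    have ae: "AE \<omega> in Pr. norm (u x \<omega>) \<le> norm (\<alpha> + \<gamma> * T \<omega>)"
    proof (rule AE_I2)
      fix \<omega>
      have "\<bar>u x \<omega>\<bar> \<le> \<alpha> + \<gamma> * T \<omega>" by (rule bnd)
      then show "norm (u x \<omega>) \<le> norm (\<alpha> + \<gamma> * T \<omega>)" by simp
    qed
    show ?thesis by (rule Bochner_Integration.integrable_bound[OF fi um ae])
  qed
  have fmid: "(f x + f y) / 2 < f ((1/2) *\<^sub>R (x + y))" if xy: "x \<noteq> y" for x y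
  proof -
    define z where "z = (1/2) *\<^sub>R (x + y)"
    define h where "h = (1/2) *\<^sub>R (x - y)"
    have zh1: "z + h = x" and zh2: "z - h = y" unfolding z_def h_def by (simp_all add: vec_eq_iff field_simps)
    have h0: "h \<noteq> 0" using xy unfolding h_def by simp
    have qn: "q h < 0" unfolding q_def \<beta>_def Wf_def by (rule q_neg[OF pd gpos h0])
    have pw: "u z \<omega> = (1/2) * u x \<omega> + (1/2) * u y \<omega> - q h" for \<omega>
      using mid[of z h \<omega>] unfolding zh1 zh2 by simp
    have "f z = (\<integral>\<omega>. (1/2) * u x \<omega> + (1/2) * u y \<omega> - q h \<partial>Pr)"
      unfolding f_eq pw ..
    also have "\<dots> = (1/2) * f x + (1/2) * f y - q h"
      using uint[of x] uint[of y] prob_space.finite_measure[OF ps] prob_space.prob_space[OF ps]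
      by (simp add: f_eq Bochner_Integration.integral_diff Bochner_Integration.integral_add
          finite_measure.integrable_const lebesgue_integral_const)
    finally show ?thesis using qn unfolding z_def by simp
  qed
  have H: "AE \<omega> in Pr. \<forall>x. f x \<le> f (delta k \<omega>)" using assms(10) kS unfolding f_def by blast
  obtain \<omega>0 where "\<forall>x. f x \<le> f (delta k \<omega>0)"
  proof -
    have "\<exists>\<omega>. \<forall>x. f x \<le> f (delta k \<omega>)"
    proof (rule ccontr)
      assume "\<not> ?thesis"
      then have "AE \<omega> in Pr. False" using H by (auto elim: eventually_mono)
      then show False using prob_space.AE_False[OF ps] by simp
    qed
    then show ?thesis using that by blast
  qed
  then have w0: "\<forall>x. f x \<le> f (delta k \<omega>0)" .
  show "\<exists>c. AE \<omega> in Pr. delta k \<omega> = c"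
  proof (intro exI)
    show "AE \<omega> in Pr. delta k \<omega> = delta k \<omega>0"
      using H
    proof (rule eventually_mono)
      fix \<omega> assume P: "\<forall>x. f x \<le> f (delta k \<omega>)"
      show "delta k \<omega> = delta k \<omega>0"
      proof (rule ccontr)
        assume ne: "delta k \<omega> \<noteq> delta k \<omega>0"
        let ?m = "(1/2) *\<^sub>R (delta k \<omega> + delta k \<omega>0)"
        have "(f (delta k \<omega>) + f (delta k \<omega>0)) / 2 < f ?m" by (rule fmid[OF ne])
        moreover have "f ?m \<le> f (delta k \<omega>)" using P by blast
        moreover have "f ?m \<le> f (delta k \<omega>0)" using w0 by blast
        ultimately show False by (simp add: field_simps)
      qed
    qed
  qed
qed


end
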